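(* Let $A$ be a commutative ring and let $(a,b)$ be a unimodular row. The following are equivalent: (1) There exist $a_0,\ldots,a_n\in A$ such that $[a,b]=\infty\cdot S(a_n)S(a_{n-1})\cdots S(a_0)$. (2) There exist $a_0,\ldots,a_n,r_0,\ldots,r_{n-1}\in A$ such that, setting $r_{-2}:=a$, $r_{-1}:=b$, $r_n:=0$, one has $r_{k-2}=a_kr_{k-1}+r_k$ for $0\le k\le n$.
   Context: A unimodular row over $A$ is $(a,b)\in A^2$ with $aA+bA=A$; $[a,b]$ denotes its class modulo multiplication by units of $A$. $\mathrm{GL}_2(A)$ acts on these classes on the right by $[u]\cdot M=[uM]$; $\infty=[1,0]$. $S(a)=\begin{pmatrix}a&1\\1&0\end{pmatrix}$. *)

theory Defs
  imports "HOL-Analysis.Analysis"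
begin

text \<open>Rows over a commutative ring are vectors of type 'a^2; 2x2 matrices are 'a^2^2
  (entry M$i$j = row i, column j).\<close>

definition row2 :: "'a::zero \<Rightarrow> 'a \<Rightarrow> 'a^2" where
  "row2 x y = vector [x, y]"

definition unimodular_row :: "'a::comm_ring_1 \<Rightarrow> 'a \<Rightarrow> bool" where
  "unimodular_row a b \<longleftrightarrow> (\<exists>x y. a * x + b * y = 1)"

definition same_class :: "'a::comm_ring_1 ^ 2 \<Rightarrow> 'a ^ 2 \<Rightarrow> bool" where
  "same_class u v \<longleftrightarrow> (\<exists>c. c dvd 1 \<and> u = c *s v)"

definition Smat :: "'a::comm_ring_1 \<Rightarrow> 'a^2^2" where
  "Smat a = vector [vector [a, 1], vector [1, 0]]"

fun Sprod :: "(nat \<Rightarrow> 'a::comm_ring_1) \<Rightarrow> nat \<Rightarrow> 'a^2^2" where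
  "Sprod f 0 = Smat (f 0)"
| "Sprod f (Suc n) = Smat (f (Suc n)) ** Sprod f n"

text \<open>infinity = [1,0]; the right action [u]\<cdot>M = [u M].\<close>
definition infty_row :: "'a::comm_ring_1 ^ 2" where
  "infty_row = row2 1 0"

end

theory Submission
  imports Defs
begin

lemma row2_eq_iff: "row2 x y = row2 x' y' \<longleftrightarrow> x = x' \<and> y = (y' :: 'a::zero)"
  by (metis row2_def vector_2)

lemma row2_nth [simp]: "row2 x y $ 1 = x" "row2 x y $ 2 = (y::'a::zero)"
  by (simp_all add: row2_def)

lemma vec2_eqI: "(u::'a^2) $ 1 = v $ 1 \<Longrightarrow> u $ 2 = v $ 2 \<Longrightarrow> u = v"
  by (metis exhaust_2 vec_eq_iff)

lemma row2_Smat: "row2 x y v* Smat c = row2 (x * c + y) (x::'a::comm_ring_1)"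
  apply (rule vec2_eqI)
  apply (simp_all add: vector_matrix_mult_def sum_2 Smat_def row2_def)
  done

lemma scal_vm: "(k *s (x::'a::comm_ring_1^2)) v* (M::'a^2^2) = k *s (x v* M)"
  apply (rule vec2_eqI)
  apply (simp_all add: vector_matrix_mult_def sum_2 algebra_simps)
  done

lemma scal_row2: "k *s row2 x y = row2 (k * x) (k * (y::'a::comm_ring_1))"
  by (rule vec2_eqI) simp_all

lemma lemA:
  fixes f :: "nat \<Rightarrow> 'a::comm_ring_1" and r :: "int \<Rightarrow> 'a"
  assumes "\<forall>k\<le>n. r (int k - 2) = f k * r (int k - 1) + r (int k)"
  shows "row2 (r (-2)) (r (-1)) = row2 (r (int n - 1)) (r (int n)) v* Sprod f n"
  using assms
proof (induction n)
  case 0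
  then show ?case by (simp add: row2_Smat mult.commute)
next
  case (Suc n)
  have e: "r (int n - 1) = f (Suc n) * r (int n) + r (int (Suc n))"
    using Suc.prems[rule_format, of "Suc n"] by (simp add: algebra_simps)
  have "row2 (r (int (Suc n) - 1)) (r (int (Suc n))) v* Sprod f (Suc n)
      = (row2 (r (int n)) (r (int (Suc n))) v* Smat (f (Suc n))) v* Sprod f n"
    by (simp add: vector_matrix_mul_assoc)
  also have "row2 (r (int n)) (r (int (Suc n))) v* Smat (f (Suc n)) = row2 (r (int n - 1)) (r (int n))"
    by (simp add: row2_Smat e mult.commute)
  finally show ?case using Suc by simp
qed

lemma lemB:
  fixes f :: "nat \<Rightarrow> 'a::comm_ring_1"
  shows "\<exists>r::int \<Rightarrow> 'a. r (int n - 1) = u $ 1 \<and> r (int n) = u $ 2 \<and>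
     (\<forall>k\<le>n. r (int k - 2) = f k * r (int k - 1) + r (int k)) \<and>
     row2 (r (-2)) (r (-1)) = u v* Sprod f n"
proof (induction n arbitrary: u)
  case 0
  define r :: "int \<Rightarrow> 'a" where "r = (\<lambda>j. if j = 0 then u $ 2 else if j = -1 then u $ 1
      else f 0 * u $ 1 + u $ 2)"
  have "u = row2 (u$1) (u$2)" by (rule vec2_eqI) simp_all
  then have "u v* Sprod f 0 = row2 (u$1 * f 0 + u$2) (u$1)" by (metis Sprod.simps(1) row2_Smat)
  then show ?case
    by (intro exI[of _ r]) (auto simp: r_def mult.commute)
next
  case (Suc n)
  obtain r where r: "r (int n - 1) = (u v* Smat (f (Suc n))) $ 1"
    "r (int n) = (u v* Smat (f (Suc n))) $ 2"
    "\<forall>k\<le>n. r (int k - 2) = f k * r (int k - 1) + r (int k)"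
    "row2 (r (-2)) (r (-1)) = (u v* Smat (f (Suc n))) v* Sprod f n"
    using Suc.IH by blast
  have uu: "u = row2 (u$1) (u$2)" by (rule vec2_eqI) simp_all
  have us: "u v* Smat (f (Suc n)) = row2 (u$1 * f (Suc n) + u$2) (u$1)"
    by (subst uu) (rule row2_Smat)
  define r' where "r' = r(int n + 1 := u $ 2)"
  have "\<forall>k\<le>Suc n. r' (int k - 2) = f k * r' (int k - 1) + r' (int k)"
  proof (intro allI impI)
    fix k assume k: "k \<le> Suc n"
    show "r' (int k - 2) = f k * r' (int k - 1) + r' (int k)"
    proof (cases "k = Suc n")
      case True
      then show ?thesis using r(1,2) us by (simp add: r'_def mult.commute)
    next
      case False
      then have "k \<le> n" using k by simp
      then show ?thesis using r(3) by (simp add: r'_def)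
    qed
  qed
  moreover have "row2 (r' (-2)) (r' (-1)) = u v* Sprod f (Suc n)"
    using r(4) by (simp add: r'_def vector_matrix_mul_assoc)
  moreover have "r' (int (Suc n) - 1) = u $ 1" "r' (int (Suc n)) = u $ 2"
    using r(2) us by (simp_all add: r'_def)
  ultimately show ?case by blast
qed

theorem lemma3p6:
  fixes a b :: "'a::comm_ring_1"
  assumes "unimodular_row a b"
  shows "(\<exists>n::nat. \<exists>as::nat \<Rightarrow> 'a. same_class (row2 a b) (infty_row v* Sprod as n))
     \<longleftrightarrow> (\<exists>n::nat. \<exists>as::nat \<Rightarrow> 'a. \<exists>r::int \<Rightarrow> 'a.
            r (-2) = a \<and> r (-1) = b \<and> r (int n) = 0 \<and>
            (\<forall>k\<le>n. r (int k - 2) = as k * r (int k - 1) + r (int k)))"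
proof
  assume "\<exists>n::nat. \<exists>as::nat \<Rightarrow> 'a. same_class (row2 a b) (infty_row v* Sprod as n)"
  then obtain n as c where c: "c dvd 1" "row2 a b = c *s (infty_row v* Sprod as n)"
    unfolding same_class_def by blast
  obtain r where r: "r (int n - 1) = (c *s infty_row) $ 1" "r (int n) = (c *s infty_row) $ 2"
     "\<forall>k\<le>n. r (int k - 2) = as k * r (int k - 1) + r (int k)"
     "row2 (r (-2)) (r (-1)) = (c *s infty_row) v* Sprod as n"
    using lemB by blast
  have "row2 (r (-2)) (r (-1)) = row2 a b" using r(4) c(2) by (simp add: scal_vm)
  then have "r (-2) = a" "r (-1) = b" by (simp_all add: row2_eq_iff)
  moreover have "r (int n) = 0" using r(2) by (simp add: infty_row_def)
  ultimately show "\<exists>n::nat. \<exists>as::nat \<Rightarrow> 'a. \<exists>r::int \<Rightarrow> 'a.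
            r (-2) = a \<and> r (-1) = b \<and> r (int n) = 0 \<and>
            (\<forall>k\<le>n. r (int k - 2) = as k * r (int k - 1) + r (int k))" using r(3) by blast
next
  assume "\<exists>n::nat. \<exists>as::nat \<Rightarrow> 'a. \<exists>r::int \<Rightarrow> 'a.
            r (-2) = a \<and> r (-1) = b \<and> r (int n) = 0 \<and>
            (\<forall>k\<le>n. r (int k - 2) = as k * r (int k - 1) + r (int k))"
  then obtain n as r where r: "r (-2) = a" "r (-1) = b" "r (int n) = 0"
      "\<forall>k\<le>n. r (int k - 2) = as k * r (int k - 1) + r (int k)" by blast
  have "row2 a b = row2 (r (int n - 1)) 0 v* Sprod as n"
    using lemA[OF r(4)] r by simp
  also have "row2 (r (int n - 1)) 0 = r (int n - 1) *s infty_row"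
    by (simp add: infty_row_def scal_row2)
  finally have e: "row2 a b = r (int n - 1) *s (infty_row v* Sprod as n)"
    by (simp add: scal_vm)
  define c where "c = r (int n - 1)"
  have "a = c * (infty_row v* Sprod as n) $ 1" "b = c * (infty_row v* Sprod as n) $ 2"
    using e unfolding c_def by (metis row2_nth vector_smult_component)+
  then have "c dvd a" "c dvd b" by auto
  then have "c dvd 1" using assms unfolding unimodular_row_def
    by (metis dvd_add dvd_mult2)
  then show "\<exists>n::nat. \<exists>as::nat \<Rightarrow> 'a. same_class (row2 a b) (infty_row v* Sprod as n)"
    using e unfolding same_class_def c_def by blast
qed

end
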